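(* Let $(G,k)$ be an instance of \textsc{Paw-free Edge Editing} with $k>0$ such that there is no independent set of $k+3$ vertices of $G$ all having the same neighborhood, and let $S$ be the set of vertices covered by a maximal (under inclusion) collection of pairwise edge-disjoint induced paws in $G$. If a vertex $x\in V(G)$ has at least $4k+6$ neighbors belonging to triangle-free connected components of $G-S$, then there is no solution $A$ of $(G,k)$ such that $x$ belongs to a connected component of $G\Delta A$ that is a complete multipartite graph.
   Context: The paw is the graph on four vertices $x_1,x_2,x_3,x_4$ with edges $x_1x_2,x_2x_3,x_1x_3,x_3x_4$; a graph is paw-free if it has no induced paw. For a set $A$ of unordered vertex pairs, $G\Delta A$ is the graph on $V(G)$ with edge set the symmetric difference of $E(G)$ and $A$. A solution of $(G,k)$ is a set $A$ of at most $k$ vertex pairs such that $G\Delta A$ is paw-free. A complete multipartite graph here means one with at least three nonempty parts (independent sets) and all edges between different parts. Neighborhoods are open neighborhoods. *)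

theory Defs
  imports Main
begin

definition graph :: "'a set \<Rightarrow> 'a set set \<Rightarrow> bool" where
  "graph V E \<longleftrightarrow> finite V \<and> (\<forall>e\<in>E. e \<subseteq> V \<and> card e = 2)"

definition adj :: "'a set set \<Rightarrow> 'a \<Rightarrow> 'a \<Rightarrow> bool" where
  "adj E u v \<longleftrightarrow> u \<noteq> v \<and> {u, v} \<in> E"

definition nbhd :: "'a set set \<Rightarrow> 'a \<Rightarrow> 'a set" where
  "nbhd E v = {u. adj E v u}"

definition is_induced_paw :: "'a set \<Rightarrow> 'a set set \<Rightarrow> 'a \<Rightarrow> 'a \<Rightarrow> 'a \<Rightarrow> 'a \<Rightarrow> bool" where
  "is_induced_paw V E x1 x2 x3 x4 \<longleftrightarrow>
     x1 \<in> V \<and> x2 \<in> V \<and> x3 \<in> V \<and> x4 \<in> V \<and>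
     distinct [x1, x2, x3, x4] \<and>
     adj E x1 x2 \<and> adj E x2 x3 \<and> adj E x1 x3 \<and> adj E x3 x4 \<and>
     \<not> adj E x1 x4 \<and> \<not> adj E x2 x4"

definition paw_free :: "'a set \<Rightarrow> 'a set set \<Rightarrow> bool" where
  "paw_free V E \<longleftrightarrow> \<not> (\<exists>x1 x2 x3 x4. is_induced_paw V E x1 x2 x3 x4)"

definition induced_paw_edges :: "'a set \<Rightarrow> 'a set set \<Rightarrow> 'a set set \<Rightarrow> bool" where
  "induced_paw_edges V E P \<longleftrightarrow> (\<exists>x1 x2 x3 x4. is_induced_paw V E x1 x2 x3 x4 \<and>
      P = {{x1, x2}, {x2, x3}, {x1, x3}, {x3, x4}})"

definition maximal_edge_disjoint_paws :: "'a set \<Rightarrow> 'a set set \<Rightarrow> 'a set set set \<Rightarrow> bool" where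
  "maximal_edge_disjoint_paws V E \<P> \<longleftrightarrow>
     (\<forall>P\<in>\<P>. induced_paw_edges V E P) \<and>
     (\<forall>P\<in>\<P>. \<forall>Q\<in>\<P>. P \<noteq> Q \<longrightarrow> P \<inter> Q = {}) \<and>
     (\<forall>Q. induced_paw_edges V E Q \<and> (\<forall>P\<in>\<P>. P \<inter> Q = {}) \<longrightarrow> Q \<in> \<P>)"

definition covered_vertices :: "'a set set set \<Rightarrow> 'a set" where
  "covered_vertices \<P> = \<Union>(\<Union>\<P>)"

definition vpairs :: "'a set \<Rightarrow> 'a set set" where
  "vpairs V = {{u, v} | u v. u \<in> V \<and> v \<in> V \<and> u \<noteq> v}"

definition is_solution :: "'a set \<Rightarrow> 'a set set \<Rightarrow> nat \<Rightarrow> 'a set set \<Rightarrow> bool" where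
  "is_solution V E k A \<longleftrightarrow> A \<subseteq> vpairs V \<and> card A \<le> k \<and> paw_free V ((E - A) \<union> (A - E))"

definition component :: "'a set \<Rightarrow> 'a set set \<Rightarrow> 'a \<Rightarrow> 'a set" where
  "component W E v = {u \<in> W. (\<lambda>a b. a \<in> W \<and> b \<in> W \<and> adj E a b)\<^sup>*\<^sup>* v u}"

definition triangle_free_on :: "'a set \<Rightarrow> 'a set set \<Rightarrow> bool" where
  "triangle_free_on C E \<longleftrightarrow>
     \<not> (\<exists>a\<in>C. \<exists>b\<in>C. \<exists>c\<in>C. adj E a b \<and> adj E b c \<and> adj E a c)"

definition independent_on :: "'a set \<Rightarrow> 'a set set \<Rightarrow> bool" where
  "independent_on I E \<longleftrightarrow> (\<forall>a\<in>I. \<forall>b\<in>I. \<not> adj E a b)"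

definition complete_multipartite_on :: "'a set \<Rightarrow> 'a set set \<Rightarrow> bool" where
  "complete_multipartite_on C E \<longleftrightarrow>
     (\<exists>\<Q>. \<Union>\<Q> = C \<and> {} \<notin> \<Q> \<and> (\<forall>P\<in>\<Q>. \<forall>Q\<in>\<Q>. P \<noteq> Q \<longrightarrow> P \<inter> Q = {}) \<and>
          finite \<Q> \<and> card \<Q> \<ge> 3 \<and>
          (\<forall>P\<in>\<Q>. independent_on P E) \<and>
          (\<forall>P\<in>\<Q>. \<forall>Q\<in>\<Q>. P \<noteq> Q \<longrightarrow> (\<forall>a\<in>P. \<forall>b\<in>Q. adj E a b)))"

end

theory Submission
  imports Defs
begin

theorem lemma7:
  fixes V :: "'a set" and E :: "'a set set" and k :: nat
    and \<P> :: "'a set set set" and x :: 'a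
  assumes "graph V E"
    and "k > 0"
    and "\<not> (\<exists>I. I \<subseteq> V \<and> card I = k + 3 \<and> independent_on I E \<and>
                 (\<forall>u\<in>I. \<forall>v\<in>I. nbhd E u = nbhd E v))"
    and "maximal_edge_disjoint_paws V E \<P>"
    and "S = covered_vertices \<P>"
    and "x \<in> V"
    and "card {y. adj E x y \<and> y \<in> V - S \<and>
                  triangle_free_on (component (V - S) E y) E} \<ge> 4 * k + 6"
  shows "\<not> (\<exists>A. is_solution V E k A \<and>
               complete_multipartite_on (component V ((E - A) \<union> (A - E)) x) ((E - A) \<union> (A - E)))"
proof
  assume "\<exists>A. is_solution V E k A \<and>
               complete_multipartite_on (component V ((E - A) \<union> (A - E)) x) ((E - A) \<union> (A - E))"
  then obtain A where sol: "is_solution V E k A"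
    and cm: "complete_multipartite_on (component V ((E - A) \<union> (A - E)) x) ((E - A) \<union> (A - E))"
    by blast
  define H where "H = (E - A) \<union> (A - E)"
  define C where "C = component V H x"
  have cm': "complete_multipartite_on C H" using cm unfolding H_def C_def .
  then obtain Q where Qu: "\<Union>Q = C"
    and Qi: "\<forall>P\<in>Q. independent_on P H"
    and Qa: "\<forall>P\<in>Q. \<forall>P'\<in>Q. P \<noteq> P' \<longrightarrow> (\<forall>a\<in>P. \<forall>b\<in>P'. adj H a b)"
    unfolding complete_multipartite_on_def by (elim exE conjE) blast
  have finV: "finite V" using assms(1) unfolding graph_def by blast
  have Avp: "A \<subseteq> vpairs V" and cardA: "card A \<le> k" using sol unfolding is_solution_def by auto
  have "vpairs V \<subseteq> Pow V" unfolding vpairs_def by blast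
  hence finA: "finite A" using Avp finV by (meson finite_Pow_iff finite_subset)
  have c2: "\<forall>e\<in>A. card e = 2" using Avp unfolding vpairs_def by auto
  have "card (\<Union>A) \<le> sum card A" by (rule card_Union_le_sum_card)
  also have "sum card A = 2 * card A" using c2 by simp
  finally have cardT: "card (\<Union>A) \<le> 2 * k" using cardA by linarith
  define N where "N = {y. adj E x y \<and> y \<in> V - S \<and>
                  triangle_free_on (component (V - S) E y) E}"
  define U where "U = N - \<Union>A"
  have finN: "finite N" using finV unfolding N_def by (rule rev_finite_subset) auto
  have "N \<subseteq> U \<union> \<Union>A" unfolding U_def by blast
  moreover have "\<Union>A \<subseteq> V" using Avp unfolding vpairs_def by blast
  hence "finite (\<Union>A)" using finV by (rule finite_subset)
  ultimately have "card N \<le> card (U \<union> \<Union>A)" using finN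
    by (intro card_mono) (auto simp: U_def)
  also have "\<dots> \<le> card U + card (\<Union>A)" by (rule card_Un_le)
  finally have cardU: "card U \<ge> 2 * k + 6" using assms(7) cardT unfolding N_def by linarith
  have finU: "finite U" using finN unfolding U_def by simp
  have unt: "adj H u v = adj E u v" "adj H v u = adj E v u" if "u \<in> U" for u v
  proof -
    have "{u, v} \<notin> A" "{v, u} \<notin> A" using that unfolding U_def by auto
    thus "adj H u v = adj E u v" "adj H v u = adj E v u" unfolding adj_def H_def by auto
  qed
  have adjsym: "adj H a b \<Longrightarrow> adj H b a" for a b unfolding adj_def by (auto simp: insert_commute)
  have HV: "adj H a b \<Longrightarrow> b \<in> V" for a b
  proof -
    assume "adj H a b"
    hence "{a, b} \<in> E \<or> {a, b} \<in> A" unfolding adj_def H_def by auto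
    thus "b \<in> V"
    proof
      assume "{a, b} \<in> E" thus ?thesis using assms(1) unfolding graph_def by blast
    next
      assume "{a, b} \<in> A" hence "{a, b} \<subseteq> \<Union>A" by blast
      thus ?thesis using \<open>\<Union>A \<subseteq> V\<close> by blast
    qed
  qed
  have closed: "u \<in> C \<Longrightarrow> adj H u v \<Longrightarrow> v \<in> C" for u v
  proof -
    assume u: "u \<in> C" and a: "adj H u v"
    have uV: "u \<in> V" using u unfolding C_def component_def by blast
    have vV: "v \<in> V" using HV a by blast
    have "(\<lambda>a b. a \<in> V \<and> b \<in> V \<and> adj H a b)\<^sup>*\<^sup>* x u" using u unfolding C_def component_def by blast
    hence "(\<lambda>a b. a \<in> V \<and> b \<in> V \<and> adj H a b)\<^sup>*\<^sup>* x v"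
      by (rule rtranclp.rtrancl_into_rtrancl) (use uV vV a in blast)
    thus "v \<in> C" using vV unfolding C_def component_def by blast
  qed
  have UC: "U \<subseteq> C"
  proof
    fix u assume u: "u \<in> U"
    have "adj E x u" using u unfolding U_def N_def by blast
    hence "adj H x u" using unt(2)[OF u, of x] by simp
    moreover have "x \<in> C" using assms(6) unfolding C_def component_def by blast
    ultimately show "u \<in> C" using closed by blast
  qed
  have nbH: "nbhd H u \<subseteq> nbhd H u'" if "P \<in> Q" "u \<in> P" "u' \<in> P" for P u u'
  proof
    fix v assume "v \<in> nbhd H u"
    hence a: "adj H u v" unfolding nbhd_def by simp
    have "u \<in> C" using that Qu by blast
    hence "v \<in> C" using closed a by blast
    then obtain P' where P': "P' \<in> Q" "v \<in> P'" using Qu by blast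
    have "v \<notin> P" using Qi that a unfolding independent_on_def by blast
    hence "P \<noteq> P'" using P' by blast
    hence "adj H u' v" using Qa that P' by blast
    thus "v \<in> nbhd H u'" unfolding nbhd_def by simp
  qed
  have nbE: "nbhd E u = nbhd H u" if "u \<in> U" for u
    unfolding nbhd_def using unt(1)[OF that] by presburger
  have big: "\<exists>P\<in>Q. card (U \<inter> P) \<ge> k + 3"
  proof (rule ccontr)
    assume "\<not> ?thesis"
    hence sm: "\<forall>P\<in>Q. card (U \<inter> P) \<le> k + 2" by force
    have pt: "\<And>u. u \<in> U \<Longrightarrow> \<exists>P\<in>Q. u \<in> P" using UC Qu by blast
    have "U \<noteq> {}" using cardU by auto
    then obtain u0 where u0: "u0 \<in> U" by blast
    then obtain P0 where P0: "P0 \<in> Q" "u0 \<in> P0" using pt by blast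
    have "card (U - P0) = card U - card (U \<inter> P0)" using finU by (simp add: card_Diff_subset_Int)
    hence c1: "card (U - P0) \<ge> k + 4" using sm P0 cardU by force
    hence "U - P0 \<noteq> {}" by (metis card.empty le_zero_eq add_is_0 zero_neq_numeral)
    then obtain u1 where u1: "u1 \<in> U" "u1 \<notin> P0" by blast
    then obtain P1 where P1: "P1 \<in> Q" "u1 \<in> P1" using pt by blast
    have "card (U - P0 - P1) = card (U - P0) - card ((U - P0) \<inter> P1)" using finU by (simp add: card_Diff_subset_Int)
    moreover have "card ((U - P0) \<inter> P1) \<le> card (U \<inter> P1)" using finU by (intro card_mono) auto
    ultimately have "card (U - P0 - P1) \<ge> 2" using sm P1 c1 by force
    hence "U - P0 - P1 \<noteq> {}" by (metis card.empty le_zero_eq zero_neq_numeral)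
    then obtain u2 where u2: "u2 \<in> U" "u2 \<notin> P0" "u2 \<notin> P1" by blast
    then obtain P2 where P2: "P2 \<in> Q" "u2 \<in> P2" using pt by blast
    have d: "P0 \<noteq> P1" "P0 \<noteq> P2" "P1 \<noteq> P2" using P0 P1 P2 u1 u2 by auto
    have "adj H u0 u1" "adj H u1 u2" "adj H u0 u2" using Qa d P0 P1 P2 by blast+
    hence e: "adj E u0 u1" "adj E u1 u2" "adj E u0 u2" using unt u0 u1 by auto
    have inN: "u0 \<in> N" "u1 \<in> N" "u2 \<in> N" using u0 u1 u2 unfolding U_def by auto
    hence tf: "triangle_free_on (component (V - S) E u0) E" and vs: "u0 \<in> V - S" "u1 \<in> V - S" "u2 \<in> V - S"
      unfolding N_def by auto
    have "u0 \<in> component (V - S) E u0" using vs unfolding component_def by auto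
    moreover have "u1 \<in> component (V - S) E u0" using vs e unfolding component_def
      by (auto intro: r_into_rtranclp)
    moreover have "u2 \<in> component (V - S) E u0" using vs e unfolding component_def
      by (auto intro: r_into_rtranclp)
    ultimately show False using tf e unfolding triangle_free_on_def by blast
  qed
  then obtain P where P: "P \<in> Q" "card (U \<inter> P) \<ge> k + 3" by blast
  then obtain I where I: "I \<subseteq> U \<inter> P" "card I = k + 3" by (meson obtain_subset_with_card_n)
  have "I \<subseteq> V" using I UC Qu unfolding C_def component_def by blast
  moreover have "independent_on I E"
    unfolding independent_on_def
  proof (intro ballI)
    fix a b assume "a \<in> I" "b \<in> I"
    hence "\<not> adj H a b" using Qi P I unfolding independent_on_def by blast
    thus "\<not> adj E a b" using unt \<open>a \<in> I\<close> I by blast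
  qed
  moreover have "\<forall>u\<in>I. \<forall>v\<in>I. nbhd E u = nbhd E v"
  proof (intro ballI)
    fix u v assume "u \<in> I" "v \<in> I"
    thus "nbhd E u = nbhd E v" using nbE nbH[OF P(1)] I by (metis IntE subset_antisym subsetD)
  qed
  ultimately show False using assms(3) I by blast
qed

end
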